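(* Let $d\ge 2$. Let $\rho_T$ be a density matrix on $\mathbb{C}^2$ with eigenvalues, sorted in decreasing order, $\{\alpha, 1-\alpha\}$, and let $\rho_A$ be a density matrix on $\mathbb{C}^d$ with eigenvalues, sorted in decreasing order, $\beta_1 \ge \beta_2 \ge \dots \ge \beta_d$. Let $U$ be any unitary on $\mathbb{C}^2\otimes\mathbb{C}^d$, and let $\rho_T^{out} = \mathrm{Tr}_A\!\left(U(\rho_T\otimes\rho_A)U^\dagger\right)$ have eigenvalues, sorted in decreasing order, $\{\alpha^{out}, 1-\alpha^{out}\}$. Then $$\alpha^{out} \le \max\left(\alpha, \frac{\beta_1}{\beta_1+\beta_d}\right).$$
   Context: $\mathrm{Tr}_A$ denotes the partial trace over the auxiliary factor $\mathbb{C}^d$; the factor $\mathbb{C}^2$ is the target qubit. *)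

theory Defs
  imports "Jordan_Normal_Form.Matrix" "Jordan_Normal_Form.Char_Poly"
begin

definition adj :: "complex mat \<Rightarrow> complex mat" where
  "adj A = mat (dim_col A) (dim_row A) (\<lambda>(i,j). cnj (A $$ (j,i)))"

definition unitary_mat :: "nat \<Rightarrow> complex mat \<Rightarrow> bool" where
  "unitary_mat n U \<longleftrightarrow> U \<in> carrier_mat n n \<and> U * adj U = 1\<^sub>m n \<and> adj U * U = 1\<^sub>m n"

definition density_mat :: "nat \<Rightarrow> complex mat \<Rightarrow> bool" where
  "density_mat n A \<longleftrightarrow> A \<in> carrier_mat n n \<and> adj A = A \<and>
     (\<forall>v \<in> carrier_vec n. 0 \<le> Re (conjugate v \<bullet> (A *\<^sub>v v))) \<and> (\<Sum>i<n. A $$ (i,i)) = 1"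

definition sorted_eigenvalues :: "nat \<Rightarrow> complex mat \<Rightarrow> (nat \<Rightarrow> real) \<Rightarrow> bool" where
  "sorted_eigenvalues n A lam \<longleftrightarrow>
     char_poly A = (\<Prod>i<n. [:- complex_of_real (lam i), 1:]) \<and>
     (\<forall>i j. i \<le> j \<longrightarrow> j < n \<longrightarrow> lam j \<le> lam i)"

text \<open>Kronecker product on C^m \<otimes> C^n, basis index (i,j) \<mapsto> i*n + j.\<close>
definition kron :: "nat \<Rightarrow> nat \<Rightarrow> complex mat \<Rightarrow> complex mat \<Rightarrow> complex mat" where
  "kron m n A B = mat (m*n) (m*n) (\<lambda>(r,c). A $$ (r div n, c div n) * B $$ (r mod n, c mod n))"

definition ptrace2 :: "nat \<Rightarrow> nat \<Rightarrow> complex mat \<Rightarrow> complex mat" where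
  "ptrace2 m n M = mat m m (\<lambda>(i,k). \<Sum>j<n. M $$ (i*n + j, k*n + j))"

end

theory Submission
  imports Defs "Jordan_Normal_Form.Schur_Decomposition"
begin


lemma adj_carrier[simp]: "A \<in> carrier_mat n m \<Longrightarrow> adj A \<in> carrier_mat m n"
  by (auto simp: adj_def)
lemma adj_dims[simp]: "dim_row (adj A) = dim_col A" "dim_col (adj A) = dim_row A"
  by (auto simp: adj_def)
lemma adj_index[simp]: "i < dim_col A \<Longrightarrow> j < dim_row A \<Longrightarrow> adj A $$ (i,j) = cnj (A $$ (j,i))"
  by (auto simp: adj_def)
lemma adj_adj[simp]: "adj (adj A) = A"
  by (rule eq_matI, auto)
lemma adj_one[simp]: "adj (1\<^sub>m n) = 1\<^sub>m n"
  by (rule eq_matI, auto)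
lemma adj_mult: assumes "A \<in> carrier_mat n k" "B \<in> carrier_mat k m"
  shows "adj (A * B) = adj B * adj A"
proof (rule eq_matI)
  fix i j assume ij: "i < dim_row (adj B * adj A)" "j < dim_col (adj B * adj A)"
  then show "adj (A * B) $$ (i, j) = (adj B * adj A) $$ (i, j)"
    using assms by (auto simp: index_mult_mat scalar_prod_def sum_conjugate intro!: sum.cong)
qed (use assms in auto)

lemma unitary_mult: assumes "unitary_mat n U" "unitary_mat n V" shows "unitary_mat n (U * V)"
proof -
  have U: "U \<in> carrier_mat n n" and V: "V \<in> carrier_mat n n" using assms unfolding unitary_mat_def by auto
  have aU: "adj U \<in> carrier_mat n n" and aV: "adj V \<in> carrier_mat n n" using U V by auto
  have "U * V * adj (U * V) = U * V * (adj V * adj U)" using U V by (simp add: adj_mult)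
  also have "\<dots> = U * (V * (adj V * adj U))" by (rule assoc_mult_mat[of _ n n _ n _ n]) (use U V aU aV in auto)
  also have "V * (adj V * adj U) = (V * adj V) * adj U" by (rule assoc_mult_mat[symmetric, of _ n n _ n _ n]) (use V aU aV in auto)
  also have "\<dots> = adj U" using assms aU unfolding unitary_mat_def by auto
  finally have 1: "U * V * adj (U * V) = 1\<^sub>m n" using assms unfolding unitary_mat_def by auto
  have "adj (U * V) * (U * V) = adj V * adj U * (U * V)" using U V by (simp add: adj_mult)
  also have "\<dots> = adj V * (adj U * (U * V))" by (rule assoc_mult_mat[of _ n n _ n _ n]) (use U V aU aV in auto)
  also have "adj U * (U * V) = (adj U * U) * V" by (rule assoc_mult_mat[symmetric, of _ n n _ n _ n]) (use U V aU in auto)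
  also have "\<dots> = V" using assms V unfolding unitary_mat_def by auto
  finally have 2: "adj (U * V) * (U * V) = 1\<^sub>m n" using assms unfolding unitary_mat_def by auto
  show ?thesis using 1 2 U V unfolding unitary_mat_def by auto
qed

lemma unitary_adj: "unitary_mat n U \<Longrightarrow> unitary_mat n (adj U)"
  unfolding unitary_mat_def by auto



lemma unit_extend:
  fixes v :: "complex vec"
  assumes v: "v \<in> carrier_vec n" and v1: "v \<bullet>c v = 1"
  shows "\<exists>W. unitary_mat n W \<and> col W 0 = v"
proof -
  have v0: "v \<noteq> 0\<^sub>v n" using v1 v by auto
  interpret cof_vec_space n "TYPE(complex)" .
  define b where "b = basis_completion v"
  from basis_completion[OF v v0, folded b_def]
  have dist_b: "distinct b" and indep: "\<not> lin_dep (set b)" and b: "set b \<subseteq> carrier_vec n"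
    and hdb: "hd b = v" and len_b: "length b = n" by auto
  have n: "n \<noteq> 0" using v0 v by (metis carrier_vecD eq_vecI less_nat_zero_code index_zero_vec(2))
  from hdb len_b n obtain vs where bv: "b = v # vs" by (cases b, auto)
  define ws where "ws = gram_schmidt n b"
  from gram_schmidt_result[OF b dist_b indep refl, folded ws_def]
  have ws: "set ws \<subseteq> carrier_vec n" "corthogonal ws" "length ws = n"
    by (auto simp: len_b)
  from gram_schmidt_hd[OF v, of vs, folded bv] have hdws: "hd ws = v" unfolding ws_def .
  have ws0: "ws ! 0 = v" using hdws n ws(3) by (cases ws, auto)
  have wsc: "\<And>i. i < n \<Longrightarrow> ws ! i \<in> carrier_vec n" using ws by auto
  define c where "c i = complex_of_real (1 / sqrt (Re (ws ! i \<bullet>c ws ! i)))" for i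
  have pos: "ws ! i \<bullet>c ws ! i > 0" if "i < n" for i
    using corthogonalD[OF ws(2), of i i] that ws(3) wsc[OF that] by (auto simp: less_le)
  have c0: "c 0 = 1" unfolding c_def ws0 v1 by simp
  have cc: "cnj (c i) * c i * (ws ! i \<bullet>c ws ! i) = 1" if "i < n" for i
  proof -
    from pos[OF that] have r: "ws ! i \<bullet>c ws ! i = complex_of_real (Re (ws ! i \<bullet>c ws ! i))"
      and p: "Re (ws ! i \<bullet>c ws ! i) > 0"
      by (auto simp: less_complex_def complex_eq_iff)
    show ?thesis unfolding c_def
      by (subst r, simp only: complex_cnj_complex_of_real of_real_mult[symmetric] of_real_eq_1_iff)
        (use p in \<open>simp add: field_simps\<close>)
  qed
  define W where "W = mat n n (\<lambda>(k,i). c i * ws ! i $ k)"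
  have W: "W \<in> carrier_mat n n" unfolding W_def by auto
  have "adj W * W = 1\<^sub>m n"
  proof (rule eq_matI)
    fix i j assume i: "i < dim_row (1\<^sub>m n)" and j: "j < dim_col (1\<^sub>m n)"
    hence i: "i < n" and j: "j < n" by auto
    have "(adj W * W) $$ (i,j) = (\<Sum>k<n. cnj (c i * ws ! i $ k) * (c j * ws ! j $ k))"
      using i j W unfolding W_def by (auto simp: index_mult_mat scalar_prod_def lessThan_atLeast0 intro!: sum.cong)
    also have "\<dots> = cnj (c i) * c j * (ws ! j \<bullet>c ws ! i)"
      using wsc[OF i] wsc[OF j]
      by (auto simp: scalar_prod_def sum_distrib_left lessThan_atLeast0 intro!: sum.cong)
    also have "\<dots> = 1\<^sub>m n $$ (i,j)"
    proof (cases "i = j")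
      case True thus ?thesis using cc[OF i] i by simp
    next
      case False
      hence "ws ! j \<bullet>c ws ! i = 0" using corthogonalD[OF ws(2), of j i] i j ws(3) by auto
      thus ?thesis using False i j by simp
    qed
    finally show "(adj W * W) $$ (i,j) = 1\<^sub>m n $$ (i,j)" .
  qed (use W in auto)
  moreover hence "W * adj W = 1\<^sub>m n" using mat_mult_left_right_inverse[of "adj W" n W] W by auto
  moreover have "col W 0 = v"
    using v n c0 ws0 unfolding W_def by (auto intro!: eq_vecI)
  ultimately show ?thesis using W unfolding unitary_mat_def by auto
qed



definition diagm :: "nat \<Rightarrow> (nat \<Rightarrow> complex) \<Rightarrow> complex mat" where
  "diagm n f = mat n n (\<lambda>(i,j). if i = j then f i else 0)"

lemma diagm_carrier[simp]: "diagm n f \<in> carrier_mat n n" by (simp add: diagm_def)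
lemma diagm_dims[simp]: "dim_row (diagm n f) = n" "dim_col (diagm n f) = n" by (auto simp add: diagm_def)

lemma sq_assoc: "A \<in> carrier_mat n n \<Longrightarrow> B \<in> carrier_mat n n \<Longrightarrow> C \<in> carrier_mat n n \<Longrightarrow>
  A * B * C = A * (B * C)" by (rule assoc_mult_mat)

lemma assoc_dim: "dim_col A = dim_row B \<Longrightarrow> dim_col B = dim_row C \<Longrightarrow> A * B * C = A * (B * C)"
  by (rule assoc_mult_mat[of A "dim_row A" "dim_col A" B "dim_col B" C "dim_col C"], auto)

lemma adj_four_block_diag:
  assumes "B \<in> carrier_mat m m"
  shows "adj (four_block_mat (1\<^sub>m 1) (0\<^sub>m 1 m) (0\<^sub>m m 1) B) = four_block_mat (1\<^sub>m 1) (0\<^sub>m 1 m) (0\<^sub>m m 1) (adj B)"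
  by (rule eq_matI, insert assms, auto)

lemma mult_four_block_diag:
  assumes "A \<in> carrier_mat 1 1" "B \<in> carrier_mat m m" "C \<in> carrier_mat 1 1" "D \<in> carrier_mat m m"
  shows "four_block_mat A (0\<^sub>m 1 m) (0\<^sub>m m 1) B * four_block_mat C (0\<^sub>m 1 m) (0\<^sub>m m 1) D
    = four_block_mat (A * C) (0\<^sub>m 1 m) (0\<^sub>m m 1) (B * D)"
  by (subst mult_four_block_mat[OF assms(1) _ _ assms(2) assms(3) _ _ assms(4)], insert assms, auto)

lemma spectral:
  assumes "A \<in> carrier_mat n n" "adj A = A" "char_poly A = (\<Prod>e\<leftarrow>es. [:-e,1:])"
  shows "\<exists>V. unitary_mat n V \<and> A = V * diagm n (\<lambda>i. es ! i) * adj V"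
  using assms
proof (induct es arbitrary: n A)
  case Nil
  with degree_monic_char_poly[of A n] have n: "n = 0" by auto
  show ?case
    by (rule exI[of _ "1\<^sub>m n"], insert Nil n, auto simp: unitary_mat_def intro!: eq_matI)
next
  case (Cons e es n A)
  have A: "A \<in> carrier_mat n n" and hA: "adj A = A" using Cons by auto
  from Cons(4) have cp: "char_poly A = [: -e, 1 :] * (\<Prod>e \<leftarrow> es. [:- e, 1:])" by auto
  have mon: "monic (\<Prod>e\<leftarrow> es. [:- e, 1:])" by (rule monic_prod_list, auto)
  have deg: "degree (char_poly A) = Suc (degree (\<Prod>e\<leftarrow> es. [:- e, 1:]))" unfolding cp
    by (subst degree_mult_eq, insert mon, auto)
  with degree_monic_char_poly[OF A] have n: "n \<noteq> 0" by auto
  have ev: "eigenvalue A e" unfolding eigenvalue_root_char_poly[OF A] cp by simp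
  define v0 where "v0 = find_eigenvector A e"
  from find_eigenvector[OF A ev] have "eigenvector A v0 e" unfolding v0_def .
  hence v0: "v0 \<in> carrier_vec n" "v0 \<noteq> 0\<^sub>v n" "A *\<^sub>v v0 = e \<cdot>\<^sub>v v0"
    unfolding eigenvector_def using A by auto
  have pos: "v0 \<bullet>c v0 > 0" using v0 by simp
  hence r: "v0 \<bullet>c v0 = complex_of_real (Re (v0 \<bullet>c v0))" and p: "Re (v0 \<bullet>c v0) > 0"
    by (auto simp: less_complex_def complex_eq_iff)
  define c where "c = complex_of_real (1 / sqrt (Re (v0 \<bullet>c v0)))"
  define v where "v = c \<cdot>\<^sub>v v0"
  have v: "v \<in> carrier_vec n" unfolding v_def using v0 by auto
  have "v \<bullet>c v = c * cnj c * (v0 \<bullet>c v0)"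
    unfolding v_def using v0 by (auto simp: scalar_prod_def sum_distrib_left intro!: sum.cong)
  also have "\<dots> = 1" unfolding c_def
    by (subst r, simp only: complex_cnj_complex_of_real of_real_mult[symmetric] of_real_eq_1_iff)
        (use p in \<open>simp add: field_simps\<close>)
  finally have v1: "v \<bullet>c v = 1" .
  have Av: "A *\<^sub>v v = e \<cdot>\<^sub>v v" unfolding v_def
    using v0 A by (simp add: mult_mat_vec smult_smult_assoc mult.commute)
  from unit_extend[OF v v1] obtain W where uW: "unitary_mat n W" and cW: "col W 0 = v" by auto
  have W: "W \<in> carrier_mat n n" and aW: "adj W \<in> carrier_mat n n" using uW unfolding unitary_mat_def by auto
  have WaW: "W * adj W = 1\<^sub>m n" and aWW: "adj W * W = 1\<^sub>m n" using uW unfolding unitary_mat_def by auto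
  define A' where "A' = adj W * A * W"
  have A': "A' \<in> carrier_mat n n" unfolding A'_def using A W by auto
  have "adj A' = adj W * adj (adj W * A)" unfolding A'_def
    by (rule adj_mult[of _ n n _ n], insert A aW W, auto)
  also have "adj (adj W * A) = adj A * W" by (subst adj_mult[of _ n n _ n], insert A aW W, auto)
  finally have "adj A' = adj W * (A * W)" unfolding hA .
  hence hA': "adj A' = A'" unfolding A'_def sq_assoc[OF aW A W] .
  have "col A' 0 = adj W *\<^sub>v (A *\<^sub>v col W 0)"
    unfolding A'_def sq_assoc[OF aW A W] using col_mult2[OF aW mult_carrier_mat[OF A W], of 0] col_mult2[OF A W, of 0] n by simp
  also have "\<dots> = e \<cdot>\<^sub>v (adj W *\<^sub>v col W 0)" unfolding cW Av using v aW by (simp add: mult_mat_vec)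
  also have "adj W *\<^sub>v col W 0 = col (adj W * W) 0" using col_mult2[OF aW W, of 0] n by simp
  finally have colA': "col A' 0 = e \<cdot>\<^sub>v col (1\<^sub>m n) 0" unfolding aWW .
  have A'i0: "A' $$ (i,0) = (if i = 0 then e else 0)" if "i < n" for i
    using arg_cong[OF colA', of "\<lambda>x. x $ i"] that A' n by auto
  have ereal: "cnj e = e"
    using arg_cong[OF hA', of "\<lambda>M. M $$ (0,0)"] A' n A'i0[of 0] by auto
  have A'0j: "A' $$ (0,j) = (if j = 0 then e else 0)" if "j < n" for j
  proof -
    have "A' $$ (0,j) = adj A' $$ (0,j)" using hA' by simp
    also have "\<dots> = cnj (A' $$ (j,0))" using A' that n by auto
    finally show ?thesis using A'i0[OF that] ereal by auto
  qed
  define m where "m = n - 1"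
  have nm: "n = 1 + m" using n unfolding m_def by auto
  define A3 where "A3 = mat m m (\<lambda>(i,j). A' $$ (Suc i, Suc j))"
  have A3: "A3 \<in> carrier_mat m m" unfolding A3_def by auto
  have A'b: "A' = four_block_mat (mat 1 1 (\<lambda>_. e)) (0\<^sub>m 1 m) (0\<^sub>m m 1) A3"
    by (rule eq_matI, insert A' A'i0 A'0j, auto simp: A3_def nm)
  have "similar_mat A' A"
    unfolding similar_mat_def
    by (rule exI[of _ "adj W"], rule exI[of _ W], rule similar_mat_witI[of _ _ n],
      insert W aW WaW aWW A A', auto simp: A'_def sq_assoc)
  from char_poly_similar[OF this] cp
  have "char_poly A' = [: -e,1 :] * (\<Prod> e \<leftarrow> es. [:- e, 1:])" by simp
  also have "char_poly A' = char_poly (mat 1 1 (\<lambda>_. e)) * char_poly A3"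
    unfolding A'b by (rule char_poly_four_block_zeros_col[OF _ _ A3], auto)
  also have "char_poly (mat 1 1 (\<lambda>_. e)) = [: -e,1 :]"
    by (simp add: char_poly_defs det_def sign_def)
  finally have cp3: "char_poly A3 = (\<Prod> e \<leftarrow> es. [:- e, 1:])"
    by (metis mult_cancel_left pCons_eq_0_iff zero_neq_one)
  have hA3: "adj A3 = A3"
  proof (rule eq_matI)
    fix i j assume "i < dim_row A3" "j < dim_col A3"
    thus "adj A3 $$ (i,j) = A3 $$ (i,j)"
      using arg_cong[OF hA', of "\<lambda>M. M $$ (Suc i, Suc j)"] A' A3 by (auto simp: A3_def nm)
  qed (use A3 in auto)
  from Cons(1)[OF A3 hA3 cp3] obtain V3 where uV3: "unitary_mat m V3"
    and A3V: "A3 = V3 * diagm m (\<lambda>i. es ! i) * adj V3" by auto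
  have V3: "V3 \<in> carrier_mat m m" and aV3: "adj V3 \<in> carrier_mat m m"
    using uV3 unfolding unitary_mat_def by auto
  define V' where "V' = four_block_mat (1\<^sub>m 1) (0\<^sub>m 1 m) (0\<^sub>m m 1) V3"
  have V': "V' \<in> carrier_mat n n" unfolding V'_def nm using V3 by auto
  have aV': "adj V' = four_block_mat (1\<^sub>m 1) (0\<^sub>m 1 m) (0\<^sub>m m 1) (adj V3)"
    unfolding V'_def by (rule adj_four_block_diag[OF V3])
  have one: "four_block_mat (1\<^sub>m 1) (0\<^sub>m 1 m) (0\<^sub>m m 1) (1\<^sub>m m) = (1\<^sub>m n :: complex mat)"
    by (rule eq_matI, auto simp: nm)
  have "V' * adj V' = four_block_mat (1\<^sub>m 1 * 1\<^sub>m 1) (0\<^sub>m 1 m) (0\<^sub>m m 1) (V3 * adj V3)"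
    unfolding aV' unfolding V'_def by (rule mult_four_block_diag, insert V3, auto)
  hence 1: "V' * adj V' = 1\<^sub>m n" using uV3 one unfolding unitary_mat_def by simp
  have "adj V' * V' = four_block_mat (1\<^sub>m 1 * 1\<^sub>m 1) (0\<^sub>m 1 m) (0\<^sub>m m 1) (adj V3 * V3)"
    unfolding aV' unfolding V'_def by (rule mult_four_block_diag, insert V3, auto)
  hence 2: "adj V' * V' = 1\<^sub>m n" using uV3 one unfolding unitary_mat_def by simp
  have uV': "unitary_mat n V'" using 1 2 V' unfolding unitary_mat_def by auto
  define D3 where "D3 = diagm m (\<lambda>i. es ! i)"
  have D3: "D3 \<in> carrier_mat m m" unfolding D3_def by simp
  have Db: "diagm n (\<lambda>i. (e # es) ! i) = four_block_mat (mat 1 1 (\<lambda>_. e)) (0\<^sub>m 1 m) (0\<^sub>m m 1) D3"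
    by (rule eq_matI, auto simp: diagm_def D3_def nm)
  have "V' * diagm n (\<lambda>i. (e # es) ! i) * adj V' = A'"
  proof -
    have E1: "mat 1 1 (\<lambda>_. e) \<in> carrier_mat 1 1" by auto
    have "V' * four_block_mat (mat 1 1 (\<lambda>_. e)) (0\<^sub>m 1 m) (0\<^sub>m m 1) D3
       = four_block_mat (1\<^sub>m 1 * mat 1 1 (\<lambda>_. e)) (0\<^sub>m 1 m) (0\<^sub>m m 1) (V3 * D3)"
      unfolding V'_def by (rule mult_four_block_diag, insert V3 D3, auto)
    also have "\<dots> * adj V' = four_block_mat (1\<^sub>m 1 * mat 1 1 (\<lambda>_. e) * 1\<^sub>m 1) (0\<^sub>m 1 m) (0\<^sub>m m 1) (V3 * D3 * adj V3)"
      unfolding aV' by (rule mult_four_block_diag, insert V3 D3, auto)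
    finally show ?thesis unfolding Db A'b A3V D3_def[symmetric] using E1 by simp
  qed
  hence "W * (V' * diagm n (\<lambda>i. (e # es) ! i) * adj V') * adj W = W * A' * adj W" by simp
  also have "\<dots> = (W * adj W) * A * (W * adj W)" unfolding A'_def
    using W aW A by (simp add: assoc_dim)
  also have "\<dots> = A" unfolding WaW using A by simp
  finally have "A = (W * V') * diagm n (\<lambda>i. (e # es) ! i) * adj (W * V')"
    using W V' aW carrier_matD[OF W] carrier_matD[OF V'] by (simp add: adj_mult[of _ n n _ n] assoc_dim)
  moreover have "unitary_mat n (W * V')" by (rule unitary_mult[OF uW uV'])
  ultimately show ?case by blast
qed



lemma sum_split_mult: "(\<Sum>l<(m::nat)*n. g l) = (\<Sum>a<m. \<Sum>b<n. g (a*n+b))"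
proof (induct m)
  case 0 then show ?case by simp
next
  case (Suc m)
  have e: "{..<Suc m * n} = {..<m*n} \<union> {m*n..<m*n+n}" by auto
  have "(\<Sum>l<Suc m * n. g l) = (\<Sum>l<m*n. g l) + (\<Sum>l\<in>{m*n..<m*n+n}. g l)"
    unfolding e by (rule sum.union_disjoint, auto)
  also have "(\<Sum>l\<in>{m*n..<m*n+n}. g l) = (\<Sum>b<n. g (m*n+b))"
    by (rule sum.reindex_bij_witness[of _ "\<lambda>b. m*n+b" "\<lambda>l. l - m*n"], auto)
  finally show ?case using Suc by simp
qed

lemma divmod_simps[simp]: "b < (n::nat) \<Longrightarrow> (a*n+b) div n = a" "b < (n::nat) \<Longrightarrow> (a*n+b) mod n = b"
  by auto

lemma kron_carrier[simp]: "kron m n A B \<in> carrier_mat (m*n) (m*n)"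
  and kron_dims[simp]: "dim_row (kron m n A B) = m*n" "dim_col (kron m n A B) = m*n"
  by (auto simp: kron_def)

lemma kron_index[simp]: "r < m*n \<Longrightarrow> c < m*n \<Longrightarrow> kron m n A B $$ (r,c) = A $$ (r div n, c div n) * B $$ (r mod n, c mod n)"
  by (auto simp: kron_def)

lemma div_less_mult: "r < m*n \<Longrightarrow> r div n < (m::nat)"
  by (simp add: less_mult_imp_div_less)
lemma mod_less_mult: "r < m*n \<Longrightarrow> r mod n < (n::nat)"
  by (metis mod_less_divisor mult_zero_right not_less_zero not_gr_zero)

lemma idx_less: "a < m \<Longrightarrow> b < n \<Longrightarrow> a*n+b < m*(n::nat)"
proof -
  assume "a < m" "b < n"
  hence "a*n+b < a*n+n" by simp
  also have "\<dots> = (a+1)*n" by simp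
  also have "\<dots> \<le> m*n" using \<open>a < m\<close> by (intro mult_right_mono) auto
  finally show ?thesis .
qed

lemma kron_mult:
  assumes A: "A \<in> carrier_mat m m" and B: "B \<in> carrier_mat n n" and C: "C \<in> carrier_mat m m" and D: "D \<in> carrier_mat n n"
  shows "kron m n A B * kron m n C D = kron m n (A * C) (B * D)"
proof (rule eq_matI)
  fix r c assume "r < dim_row (kron m n (A * C) (B * D))" "c < dim_col (kron m n (A * C) (B * D))"
  hence r: "r < m*n" and c: "c < m*n" by auto
  note rc = div_less_mult[OF r] mod_less_mult[OF r] div_less_mult[OF c] mod_less_mult[OF c]
  have "(kron m n A B * kron m n C D) $$ (r,c) = (\<Sum>l<m*n. kron m n A B $$ (r,l) * kron m n C D $$ (l,c))"
    using r c by (simp add: index_mult_mat scalar_prod_def lessThan_atLeast0)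
  also have "\<dots> = (\<Sum>a<m. \<Sum>b<n. (A $$ (r div n, a) * C $$ (a, c div n)) * (B $$ (r mod n, b) * D $$ (b, c mod n)))"
    unfolding sum_split_mult using r c
    by (intro sum.cong refl, auto simp: kron_index idx_less)
  also have "\<dots> = (\<Sum>a<m. A $$ (r div n, a) * C $$ (a, c div n)) * (\<Sum>b<n. B $$ (r mod n, b) * D $$ (b, c mod n))"
    by (simp add: sum_product)
  also have "\<dots> = kron m n (A * C) (B * D) $$ (r,c)"
    using r c rc A B C D by (simp add: index_mult_mat scalar_prod_def lessThan_atLeast0)
  finally show "(kron m n A B * kron m n C D) $$ (r,c) = kron m n (A * C) (B * D) $$ (r,c)" .
qed auto

lemma kron_adj:
  assumes A: "A \<in> carrier_mat m m" and B: "B \<in> carrier_mat n n"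
  shows "adj (kron m n A B) = kron m n (adj A) (adj B)"
  by (rule eq_matI, insert A B, auto simp: div_less_mult mod_less_mult)

lemma kron_one: "kron m n (1\<^sub>m m) (1\<^sub>m n) = 1\<^sub>m (m*n)"
proof (rule eq_matI)
  fix r c assume "r < dim_row (1\<^sub>m (m * n))" "c < dim_col (1\<^sub>m (m * n))"
  hence r: "r < m*n" and c: "c < m*n" by auto
  have "(r div n = c div n \<and> r mod n = c mod n) = (r = c)"
    by (metis div_mult_mod_eq)
  thus "kron m n (1\<^sub>m m) (1\<^sub>m n) $$ (r,c) = 1\<^sub>m (m*n) $$ (r,c)"
    using r c by (auto simp: div_less_mult mod_less_mult)
qed auto

lemma kron_unitary:
  assumes "unitary_mat m A" "unitary_mat n B"
  shows "unitary_mat (m*n) (kron m n A B)"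
proof -
  have A: "A \<in> carrier_mat m m" and B: "B \<in> carrier_mat n n" using assms unfolding unitary_mat_def by auto
  show ?thesis unfolding unitary_mat_def
    using assms A B by (simp add: kron_adj kron_mult kron_one unitary_mat_def)
qed

lemma kron_diagm: "kron m n (diagm m f) (diagm n g) = diagm (m*n) (\<lambda>l. f (l div n) * g (l mod n))"
proof (rule eq_matI)
  fix r c assume "r < dim_row (diagm (m * n) (\<lambda>l. f (l div n) * g (l mod n)))"
    "c < dim_col (diagm (m * n) (\<lambda>l. f (l div n) * g (l mod n)))"
  hence r: "r < m*n" and c: "c < m*n" by auto
  have "(r div n = c div n \<and> r mod n = c mod n) = (r = c)"
    by (metis div_mult_mod_eq)
  thus "kron m n (diagm m f) (diagm n g) $$ (r,c) = diagm (m * n) (\<lambda>l. f (l div n) * g (l mod n)) $$ (r,c)"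
    using r c by (auto simp: div_less_mult mod_less_mult diagm_def)
qed auto



lemma prod_upt_list: "(\<Prod>i<n. f i) = prod_list (map f [0..<n])"
  by (induct n) (auto simp: mult.commute)

lemma spec_sorted:
  assumes A: "A \<in> carrier_mat n n" and h: "adj A = A" and s: "sorted_eigenvalues n A lam"
  shows "\<exists>V. unitary_mat n V \<and> A = V * diagm n (\<lambda>i. complex_of_real (lam i)) * adj V"
proof -
  define es where "es = map (\<lambda>i. complex_of_real (lam i)) [0..<n]"
  have "char_poly A = (\<Prod>e\<leftarrow>es. [:-e,1:])"
    using s unfolding sorted_eigenvalues_def es_def prod_upt_list by (simp add: o_def)
  from spectral[OF A h this] obtain V where "unitary_mat n V" "A = V * diagm n (\<lambda>i. es ! i) * adj V" by auto
  moreover have "diagm n (\<lambda>i. es ! i) = diagm n (\<lambda>i. complex_of_real (lam i))"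
    by (rule eq_matI, auto simp: diagm_def es_def)
  ultimately show ?thesis by auto
qed

lemma spec_entry:
  assumes V: "V \<in> carrier_mat n n" and k: "k < n" and l: "l < n"
  shows "(V * diagm n f * adj V) $$ (k,l) = (\<Sum>p<n. V $$ (k,p) * f p * cnj (V $$ (l,p)))"
proof -
  have "(V * diagm n f * adj V) $$ (k,l) = (\<Sum>q<n. (\<Sum>p<n. V $$ (k,p) * diagm n f $$ (p,q)) * cnj (V $$ (l,q)))"
    using V k l by (simp add: index_mult_mat scalar_prod_def lessThan_atLeast0)
  also have "\<dots> = (\<Sum>q<n. V $$ (k,q) * f q * cnj (V $$ (l,q)))"
  proof (rule sum.cong[OF refl])
    fix q assume q: "q \<in> {..<n}"
    have "(\<Sum>p<n. V $$ (k,p) * diagm n f $$ (p,q)) = (\<Sum>p<n. if p = q then V $$ (k,q) * f q else 0)"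
      using q by (intro sum.cong refl, auto simp: diagm_def)
    also have "\<dots> = V $$ (k,q) * f q" using q by (simp add: sum.delta)
    finally show "(\<Sum>p<n. V $$ (k,p) * diagm n f $$ (p,q)) * cnj (V $$ (l,q)) = V $$ (k,q) * f q * cnj (V $$ (l,q))" by simp
  qed
  finally show ?thesis .
qed

lemma unitary_col_norm:
  assumes "unitary_mat n V" "p < n"
  shows "(\<Sum>k<n. cnj (V $$ (k,p)) * V $$ (k,p)) = 1"
proof -
  have "(adj V * V) $$ (p,p) = 1" using assms unfolding unitary_mat_def by auto
  moreover have "V \<in> carrier_mat n n" using assms unfolding unitary_mat_def by auto
  ultimately show ?thesis using assms(2-) by (simp add: index_mult_mat scalar_prod_def lessThan_atLeast0)
qed

lemma unitary_col_orth:
  assumes "unitary_mat n V" "p < n" "q < n"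
  shows "(\<Sum>k<n. cnj (V $$ (k,p)) * V $$ (k,q)) = (if p = q then 1 else 0)"
proof -
  have "(adj V * V) $$ (p,q) = (if p = q then 1 else 0)" using assms unfolding unitary_mat_def by auto
  moreover have "V \<in> carrier_mat n n" using assms unfolding unitary_mat_def by auto
  ultimately show ?thesis using assms(2-) by (simp add: index_mult_mat scalar_prod_def lessThan_atLeast0)
qed

lemma unitary_row_orth:
  assumes "unitary_mat n V" "p < n" "q < n"
  shows "(\<Sum>k<n. V $$ (p,k) * cnj (V $$ (q,k))) = (if p = q then 1 else 0)"
proof -
  have "(V * adj V) $$ (p,q) = (if p = q then 1 else 0)" using assms unfolding unitary_mat_def by auto
  moreover have "V \<in> carrier_mat n n" using assms unfolding unitary_mat_def by auto
  ultimately show ?thesis using assms(2-) by (simp add: index_mult_mat scalar_prod_def lessThan_atLeast0)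
qed

lemma eig_sum:
  assumes u: "unitary_mat n V" and A: "A = V * diagm n f * adj V"
  shows "(\<Sum>k<n. A $$ (k,k)) = (\<Sum>p<n. f p)"
proof -
  have V: "V \<in> carrier_mat n n" using u unfolding unitary_mat_def by auto
  have "(\<Sum>k<n. A $$ (k,k)) = (\<Sum>k<n. \<Sum>p<n. V $$ (k,p) * f p * cnj (V $$ (k,p)))"
    unfolding A using spec_entry[OF V] by simp
  also have "\<dots> = (\<Sum>p<n. f p * (\<Sum>k<n. cnj (V $$ (k,p)) * V $$ (k,p)))"
    by (subst sum.swap, simp add: sum_distrib_left mult_ac)
  also have "\<dots> = (\<Sum>p<n. f p)" using unitary_col_norm[OF u] by simp
  finally show ?thesis .
qed

lemma eig_nonneg:
  assumes d: "density_mat n A" and u: "unitary_mat n V" and A: "A = V * diagm n (\<lambda>i. complex_of_real (lam i)) * adj V"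
    and p: "p < n"
  shows "lam p \<ge> 0"
proof -
  have V: "V \<in> carrier_mat n n" using u unfolding unitary_mat_def by auto
  define v where "v = col V p"
  have v: "v \<in> carrier_vec n" unfolding v_def using V by auto
  have "conjugate v \<bullet> (A *\<^sub>v v) = (\<Sum>k<n. cnj (V $$ (k,p)) * (\<Sum>l<n. A $$ (k,l) * V $$ (l,p)))"
    unfolding v_def using V p A by (simp add: scalar_prod_def lessThan_atLeast0)
  also have "\<dots> = (\<Sum>k<n. \<Sum>l<n. \<Sum>q<n. cnj (V $$ (k,p)) * V $$ (k,q) * complex_of_real (lam q) * (cnj (V $$ (l,q)) * V $$ (l,p)))"
    unfolding A using spec_entry[OF V]
    by (simp add: sum_distrib_left mult_ac)
  also have "\<dots> = (\<Sum>k<n. \<Sum>q<n. \<Sum>l<n. cnj (V $$ (k,p)) * V $$ (k,q) * complex_of_real (lam q) * (cnj (V $$ (l,q)) * V $$ (l,p)))"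
    by (rule sum.cong[OF refl], rule sum.swap)
  also have "\<dots> = (\<Sum>q<n. \<Sum>k<n. \<Sum>l<n. cnj (V $$ (k,p)) * V $$ (k,q) * complex_of_real (lam q) * (cnj (V $$ (l,q)) * V $$ (l,p)))"
    by (rule sum.swap)
  also have "\<dots> = (\<Sum>q<n. complex_of_real (lam q) * ((\<Sum>l<n. cnj (V $$ (l,q)) * V $$ (l,p)) * (\<Sum>k<n. cnj (V $$ (k,p)) * V $$ (k,q))))"
    apply (simp add: sum_product sum_distrib_left mult_ac)
    apply (rule sum.cong[OF refl])
    apply (subst sum.swap)
    apply (simp add: mult_ac)
    done
  also have "\<dots> = (\<Sum>q<n. if q = p then complex_of_real (lam q) else 0)"
    by (intro sum.cong refl, auto simp: unitary_col_orth[OF u] p)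
  also have "\<dots> = complex_of_real (lam p)" using p by (simp add: sum.delta')
  finally have "Re (conjugate v \<bullet> (A *\<^sub>v v)) = lam p" by simp
  moreover have "0 \<le> Re (conjugate v \<bullet> (A *\<^sub>v v))" using d v unfolding density_mat_def by auto
  ultimately show ?thesis by simp
qed



lemma box_affine:
  fixes a b c x y :: real
  assumes "a \<le> 0" "a + b \<le> 0" "a + c \<le> 0" "a + b + c \<le> 0" "0 \<le> x" "x \<le> 1" "0 \<le> y" "y \<le> 1"
  shows "a + b * x + c * y \<le> 0"
proof -
  have bx: "b * x \<le> max b 0"
    by (cases "b \<ge> 0") (use assms in \<open>auto intro: mult_left_le mult_nonpos_nonneg\<close>)
  have cy: "c * y \<le> max c 0"
    by (cases "c \<ge> 0") (use assms in \<open>auto intro: mult_left_le mult_nonpos_nonneg\<close>)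
  have "a + max b 0 + max c 0 \<le> 0" using assms by (auto simp: max_def)
  thus ?thesis using bx cy by linarith
qed

lemma scalar_bound:
  fixes \<alpha> :: real and \<beta> x y :: "nat \<Rightarrow> real" and d :: nat
  assumes d: "d \<ge> 1" and a1: "1 - \<alpha> \<le> \<alpha>" and a2: "0 \<le> 1 - \<alpha>"
    and b0: "\<And>j. j < d \<Longrightarrow> 0 \<le> \<beta> j" and b1: "\<And>j. j < d \<Longrightarrow> \<beta> j \<le> \<beta> 0"
    and b2: "\<And>j. j < d \<Longrightarrow> \<beta> (d - 1) \<le> \<beta> j" and bs: "(\<Sum>j<d. \<beta> j) = 1"
    and x: "\<And>j. j < d \<Longrightarrow> 0 \<le> x j \<and> x j \<le> 1" and y: "\<And>j. j < d \<Longrightarrow> 0 \<le> y j \<and> y j \<le> 1"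
    and xs: "(\<Sum>j<d. x j + y j) = real d"
  shows "(\<Sum>j<d. \<beta> j * (\<alpha> * x j + (1 - \<alpha>) * y j)) \<le> max \<alpha> (\<beta> 0 / (\<beta> 0 + \<beta> (d - 1)))"
proof -
  define B1 where "B1 = \<beta> 0"
  define Bd where "Bd = \<beta> (d - 1)"
  have Bd0: "Bd \<ge> 0" unfolding Bd_def using b0[of "d-1"] d by auto
  have B1pos: "B1 > 0"
  proof (rule ccontr)
    assume "\<not> B1 > 0"
    hence "(\<Sum>j<d. \<beta> j) \<le> (\<Sum>j<d. 0)" using b1 unfolding B1_def by (intro sum_mono) force
    thus False using bs by simp
  qed
  define T where "T = (\<Sum>j<d. \<beta> j * (\<alpha> * x j + (1 - \<alpha>) * y j))"
  have sumd: "(\<Sum>j<d. x j + y j - 1) = 0" using xs by (simp add: sum_subtractf)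
  show ?thesis
  proof (cases "\<alpha> * (B1 + Bd) \<ge> B1")
    case True
    have "\<beta> j * (\<alpha> * x j + (1 - \<alpha>) * y j - \<alpha>) - \<alpha> * Bd * (x j + y j - 1) \<le> 0" if j: "j < d" for j
    proof -
      have "(- \<alpha> * \<beta> j + \<alpha> * Bd) + (\<alpha> * \<beta> j - \<alpha> * Bd) * x j + ((1 - \<alpha>) * \<beta> j - \<alpha> * Bd) * y j \<le> 0"
      proof (rule box_affine)
        have "\<alpha> * Bd \<le> \<alpha> * \<beta> j" using b2[OF j] a1 a2 unfolding Bd_def by (intro mult_left_mono) auto
        thus "- \<alpha> * \<beta> j + \<alpha> * Bd \<le> 0" by simp
        show "- \<alpha> * \<beta> j + \<alpha> * Bd + (\<alpha> * \<beta> j - \<alpha> * Bd) \<le> 0" by simp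
        have "(1 - \<alpha>) * \<beta> j \<le> (1 - \<alpha>) * B1" using b1[OF j] a2 unfolding B1_def by (rule mult_left_mono)
        have "(1 - \<alpha>) * B1 \<le> \<alpha> * Bd" using True by (simp add: algebra_simps)
        have "(1 - \<alpha>) * \<beta> j \<le> \<alpha> * \<beta> j" using a1 b0[OF j] by (intro mult_right_mono) auto
        thus "- \<alpha> * \<beta> j + \<alpha> * Bd + ((1 - \<alpha>) * \<beta> j - \<alpha> * Bd) \<le> 0" by simp
        show "- \<alpha> * \<beta> j + \<alpha> * Bd + (\<alpha> * \<beta> j - \<alpha> * Bd) + ((1 - \<alpha>) * \<beta> j - \<alpha> * Bd) \<le> 0"
          using \<open>(1 - \<alpha>) * \<beta> j \<le> (1 - \<alpha>) * B1\<close> \<open>(1 - \<alpha>) * B1 \<le> \<alpha> * Bd\<close> by linarith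
      qed (use x[OF j] y[OF j] in auto)
      thus ?thesis by (simp add: algebra_simps)
    qed
    hence "(\<Sum>j<d. \<beta> j * (\<alpha> * x j + (1 - \<alpha>) * y j - \<alpha>) - \<alpha> * Bd * (x j + y j - 1)) \<le> 0"
      by (intro sum_nonpos) auto
    moreover have "(\<Sum>j<d. \<beta> j * (\<alpha> * x j + (1 - \<alpha>) * y j - \<alpha>)) = T - \<alpha> * (\<Sum>j<d. \<beta> j)"
      unfolding T_def by (simp add: right_diff_distrib sum_subtractf sum_distrib_left mult.commute)
    moreover have "(\<Sum>j<d. \<alpha> * Bd * (x j + y j - 1)) = \<alpha> * Bd * (\<Sum>j<d. x j + y j - 1)"
      by (simp add: sum_distrib_left)
    ultimately have "T - \<alpha> * (\<Sum>j<d. \<beta> j) - \<alpha> * Bd * (\<Sum>j<d. x j + y j - 1) \<le> 0"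
      by (simp add: sum_subtractf)
    hence "T \<le> \<alpha>" using bs sumd by simp
    thus ?thesis unfolding T_def by simp
  next
    case False
    have S: "B1 + Bd > 0" using B1pos Bd0 by simp
    have "\<beta> j * ((B1 + Bd) * (\<alpha> * x j + (1 - \<alpha>) * y j) - B1) - B1 * Bd * (x j + y j - 1) \<le> 0" if j: "j < d" for j
    proof -
      have bj: "0 \<le> \<beta> j" "\<beta> j \<le> B1" "Bd \<le> \<beta> j" using b0[OF j] b1[OF j] b2[OF j] unfolding B1_def Bd_def by auto
      have h1: "(B1 + Bd) * (1 - \<alpha>) \<le> B1"
      proof -
        have "(B1 + Bd) * (1 - \<alpha>) \<le> (B1 + Bd) * (1/2)" using a1 S by (intro mult_left_mono) auto
        also have "\<dots> \<le> B1" using bj by simp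
        finally show ?thesis .
      qed
      have "(- \<beta> j * B1 + B1 * Bd) + (\<beta> j * (B1 + Bd) * \<alpha> - B1 * Bd) * x j + (\<beta> j * (B1 + Bd) * (1 - \<alpha>) - B1 * Bd) * y j \<le> 0"
      proof (rule box_affine)
        show "- \<beta> j * B1 + B1 * Bd \<le> 0" using bj B1pos by (simp add: mult_left_mono mult.commute)
        have "\<beta> j * ((B1 + Bd) * \<alpha>) \<le> \<beta> j * B1" using False bj by (intro mult_left_mono) (auto simp: mult.commute)
        thus "- \<beta> j * B1 + B1 * Bd + (\<beta> j * (B1 + Bd) * \<alpha> - B1 * Bd) \<le> 0" by (simp add: algebra_simps)
        have "\<beta> j * ((B1 + Bd) * (1 - \<alpha>)) \<le> \<beta> j * B1" using h1 bj by (intro mult_left_mono) auto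
        thus "- \<beta> j * B1 + B1 * Bd + (\<beta> j * (B1 + Bd) * (1 - \<alpha>) - B1 * Bd) \<le> 0" by (simp add: algebra_simps)
        have "\<beta> j * Bd \<le> B1 * Bd" using bj Bd0 by (intro mult_right_mono) auto
        thus "- \<beta> j * B1 + B1 * Bd + (\<beta> j * (B1 + Bd) * \<alpha> - B1 * Bd) + (\<beta> j * (B1 + Bd) * (1 - \<alpha>) - B1 * Bd) \<le> 0"
          by (simp add: algebra_simps)
      qed (use x[OF j] y[OF j] in auto)
      thus ?thesis by (simp add: algebra_simps)
    qed
    hence "(\<Sum>j<d. \<beta> j * ((B1 + Bd) * (\<alpha> * x j + (1 - \<alpha>) * y j) - B1) - B1 * Bd * (x j + y j - 1)) \<le> 0"
      by (intro sum_nonpos) auto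
    moreover have "(\<Sum>j<d. \<beta> j * ((B1 + Bd) * (\<alpha> * x j + (1 - \<alpha>) * y j) - B1)) = (B1 + Bd) * T - B1 * (\<Sum>j<d. \<beta> j)"
      unfolding T_def by (simp add: right_diff_distrib sum_subtractf sum_distrib_left mult.commute mult.left_commute)
    moreover have "(\<Sum>j<d. B1 * Bd * (x j + y j - 1)) = B1 * Bd * (\<Sum>j<d. x j + y j - 1)"
      by (simp add: sum_distrib_left)
    ultimately have "(B1 + Bd) * T - B1 * (\<Sum>j<d. \<beta> j) - B1 * Bd * (\<Sum>j<d. x j + y j - 1) \<le> 0"
      by (simp add: sum_subtractf)
    hence "(B1 + Bd) * T \<le> B1" using bs sumd by simp
    hence "T \<le> B1 / (B1 + Bd)" using S by (simp add: field_simps)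
    thus ?thesis unfolding T_def B1_def Bd_def by simp
  qed
qed



lemma sum2: "(\<Sum>i<(2::nat). f i) = f 0 + f 1"
  by (simp add: numeral_2_eq_2)

lemma ptrace_quadform:
  assumes X: "X \<in> carrier_mat (2*d) (2*d)" and v: "v \<in> carrier_vec 2"
  shows "conjugate v \<bullet> (ptrace2 2 d (X * diagm (2*d) e * adj X) *\<^sub>v v)
    = (\<Sum>l<2*d. e l * (\<Sum>j<d. (\<Sum>i<2. cnj (v$i) * X$$(i*d+j,l)) * cnj (\<Sum>i<2. cnj (v$i) * X$$(i*d+j,l))))"
proof -
  define \<sigma> where "\<sigma> = X * diagm (2*d) e * adj X"
  have se: "\<sigma> $$ (r,c) = (\<Sum>l<2*d. X $$ (r,l) * e l * cnj (X $$ (c,l)))" if "r < 2*d" "c < 2*d" for r c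
    unfolding \<sigma>_def by (rule spec_entry[OF X that])
  have idx: "i*d+j < 2*d" if "i < 2" "j < d" for i j using idx_less[OF that] .
  have "conjugate v \<bullet> (ptrace2 2 d \<sigma> *\<^sub>v v) = (\<Sum>i<2. cnj (v$i) * (\<Sum>k<2. (\<Sum>j<d. \<sigma> $$ (i*d+j, k*d+j)) * v$k))"
    using v by (simp add: scalar_prod_def ptrace2_def lessThan_atLeast0)
  also have "\<dots> = (\<Sum>i<2. cnj (v$i) * (\<Sum>k<2. (\<Sum>j<d. \<Sum>l<2*d. X $$ (i*d+j,l) * e l * cnj (X $$ (k*d+j,l))) * v$k))"
    by (intro sum.cong refl arg_cong2[where f="(*)"] arg_cong2[where f="(*)"] se idx) auto
  also have "\<dots> = (\<Sum>j<d. \<Sum>l<2*d. e l * ((\<Sum>i<2. cnj (v$i) * X$$(i*d+j,l)) * cnj (\<Sum>i<2. cnj (v$i) * X$$(i*d+j,l))))"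
    by (simp add: sum2 sum_distrib_left sum_distrib_right sum.distrib algebra_simps)
  also have "\<dots> = (\<Sum>l<2*d. e l * (\<Sum>j<d. (\<Sum>i<2. cnj (v$i) * X$$(i*d+j,l)) * cnj (\<Sum>i<2. cnj (v$i) * X$$(i*d+j,l))))"
    by (subst sum.swap) (simp add: sum_distrib_left)
  finally show ?thesis unfolding \<sigma>_def .
qed



lemma cs2: "(cmod (a * x + b * y))^2 \<le> ((cmod a)^2 + (cmod b)^2) * ((cmod x)^2 + (cmod y)^2)"
proof -
  have "cmod (a * x + b * y) \<le> cmod a * cmod x + cmod b * cmod y"
    by (metis norm_mult norm_triangle_ineq)
  hence "(cmod (a * x + b * y))^2 \<le> (cmod a * cmod x + cmod b * cmod y)^2"
    by (intro power_mono) auto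
  also have "\<dots> \<le> ((cmod a)^2 + (cmod b)^2) * ((cmod x)^2 + (cmod y)^2)"
  proof -
    have "0 \<le> (cmod a * cmod y - cmod b * cmod x)^2" by simp
    thus ?thesis by (simp add: power2_eq_square algebra_simps)
  qed
  finally show ?thesis .
qed

lemma cnj_sq: "cnj z * z = complex_of_real ((cmod z)^2)"
  by (metis complex_norm_square mult.commute)

lemma q_le1:
  assumes u: "unitary_mat (2*d) X" and l: "l < 2*d"
    and vn: "(cmod a0)^2 + (cmod a1)^2 = 1"
  shows "(\<Sum>j<d. (cmod (a0 * X$$(j,l) + a1 * X$$(d+j,l)))^2) \<le> 1"
proof -
  have "(\<Sum>j<d. (cmod (a0 * X$$(j,l) + a1 * X$$(d+j,l)))^2) \<le> (\<Sum>j<d. (cmod (X$$(j,l)))^2 + (cmod (X$$(d+j,l)))^2)"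
  proof (rule sum_mono)
    fix j
    show "(cmod (a0 * X$$(j,l) + a1 * X$$(d+j,l)))^2 \<le> (cmod (X$$(j,l)))^2 + (cmod (X$$(d+j,l)))^2"
      using cs2[of a0 "X$$(j,l)" a1 "X$$(d+j,l)"] vn by simp
  qed
  also have "\<dots> = (\<Sum>r<2*d. (cmod (X$$(r,l)))^2)"
    unfolding sum_split_mult by (simp add: sum2 sum.distrib)
  also have "\<dots> = 1"
  proof -
    have "complex_of_real (\<Sum>r<2*d. (cmod (X$$(r,l)))^2) = (\<Sum>r<2*d. cnj (X $$ (r,l)) * X $$ (r,l))"
      by (simp add: cnj_sq)
    also have "\<dots> = 1" by (rule unitary_col_norm[OF u l])
    finally show ?thesis by (simp only: of_real_eq_1_iff)
  qed
  finally show ?thesis .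
qed

lemma q_sum:
  assumes u: "unitary_mat (2*d) X"
    and vn: "cnj a0 * a0 + cnj a1 * a1 = 1"
  shows "(\<Sum>l<2*d. \<Sum>j<d. (a0 * X$$(j,l) + a1 * X$$(d+j,l)) * cnj (a0 * X$$(j,l) + a1 * X$$(d+j,l))) = of_nat d"
proof -
  have j1: "j < 2*d" "d + j < 2*d" if "j < d" for j using that by auto
  have ne: "j \<noteq> d + k" "d + j \<noteq> k" if "j < d" "k < d" for j k using that by auto
  have "(\<Sum>l<2*d. \<Sum>j<d. (a0 * X$$(j,l) + a1 * X$$(d+j,l)) * cnj (a0 * X$$(j,l) + a1 * X$$(d+j,l)))
    = (\<Sum>j<d. a0 * cnj a0 * (\<Sum>l<2*d. X$$(j,l) * cnj (X$$(j,l))) + a0 * cnj a1 * (\<Sum>l<2*d. X$$(j,l) * cnj (X$$(d+j,l)))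
        + a1 * cnj a0 * (\<Sum>l<2*d. X$$(d+j,l) * cnj (X$$(j,l))) + a1 * cnj a1 * (\<Sum>l<2*d. X$$(d+j,l) * cnj (X$$(d+j,l))))"
    apply (subst sum.swap)
    by (simp add: sum_distrib_left sum.distrib algebra_simps)
  also have "\<dots> = (\<Sum>j<d. a0 * cnj a0 + a1 * cnj a1)"
    by (intro sum.cong refl, auto simp: unitary_row_orth[OF u] j1)
  also have "\<dots> = of_nat d" using vn by (simp add: mult.commute)
  finally show ?thesis .
qed



lemma normalize_eigen:
  fixes \<tau> :: "complex mat"
  assumes tau: "\<tau> \<in> carrier_mat n n" and ev: "eigenvalue \<tau> a"
  shows "\<exists>v. v \<in> carrier_vec n \<and> v \<bullet>c v = 1 \<and> \<tau> *\<^sub>v v = a \<cdot>\<^sub>v v"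
proof -
  define v0 where "v0 = find_eigenvector \<tau> a"
  from find_eigenvector[OF tau ev] have "eigenvector \<tau> v0 a" unfolding v0_def .
  hence v0: "v0 \<in> carrier_vec n" "v0 \<noteq> 0\<^sub>v n" "\<tau> *\<^sub>v v0 = a \<cdot>\<^sub>v v0"
    unfolding eigenvector_def using tau by auto
  have pos: "v0 \<bullet>c v0 > 0" using v0 by simp
  hence r: "v0 \<bullet>c v0 = complex_of_real (Re (v0 \<bullet>c v0))" and p: "Re (v0 \<bullet>c v0) > 0"
    by (auto simp: less_complex_def complex_eq_iff)
  define c where "c = complex_of_real (1 / sqrt (Re (v0 \<bullet>c v0)))"
  define v where "v = c \<cdot>\<^sub>v v0"
  have v: "v \<in> carrier_vec n" unfolding v_def using v0 by auto
  have "v \<bullet>c v = c * cnj c * (v0 \<bullet>c v0)"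
    unfolding v_def using v0 by (auto simp: scalar_prod_def sum_distrib_left intro!: sum.cong)
  also have "\<dots> = 1" unfolding c_def
    by (subst r, simp only: complex_cnj_complex_of_real of_real_mult[symmetric] of_real_eq_1_iff)
        (use p in \<open>simp add: field_simps\<close>)
  finally have v1: "v \<bullet>c v = 1" .
  have Av: "\<tau> *\<^sub>v v = a \<cdot>\<^sub>v v" unfolding v_def
    using v0 tau by (simp add: mult_mat_vec smult_smult_assoc mult.commute)
  show ?thesis using v v1 Av by blast
qed

lemma prod2: "(\<Prod>i<(2::nat). f i) = f 0 * f 1"
  by (simp add: numeral_2_eq_2)

theorem theorem2:
  fixes d :: nat and rhoT rhoA U :: "complex mat"
    and \<alpha> \<alpha>out :: real and \<beta> :: "nat \<Rightarrow> real"
  assumes "d \<ge> 2"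
    and "density_mat 2 rhoT"
    and "sorted_eigenvalues 2 rhoT (\<lambda>i. if i = 0 then \<alpha> else 1 - \<alpha>)"
    and "density_mat d rhoA"
    and "sorted_eigenvalues d rhoA \<beta>"
    and "unitary_mat (2*d) U"
    and "sorted_eigenvalues 2 (ptrace2 2 d (U * kron 2 d rhoT rhoA * adj U))
           (\<lambda>i. if i = 0 then \<alpha>out else 1 - \<alpha>out)"
  shows "\<alpha>out \<le> max \<alpha> (\<beta> 0 / (\<beta> 0 + \<beta> (d - 1)))"
proof -
  define fT where "fT = (\<lambda>i::nat. if i = 0 then \<alpha> else 1 - \<alpha>)"
  have dT: "density_mat 2 rhoT" and dA: "density_mat d rhoA" using assms by auto
  have T: "rhoT \<in> carrier_mat 2 2" "adj rhoT = rhoT" using dT unfolding density_mat_def by auto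
  have A: "rhoA \<in> carrier_mat d d" "adj rhoA = rhoA" using dA unfolding density_mat_def by auto
  from spec_sorted[OF T assms(3)[folded fT_def]] obtain VT where uVT: "unitary_mat 2 VT"
    and eT: "rhoT = VT * diagm 2 (\<lambda>i. complex_of_real (fT i)) * adj VT" by auto
  from spec_sorted[OF A assms(5)] obtain VA where uVA: "unitary_mat d VA"
    and eA: "rhoA = VA * diagm d (\<lambda>i. complex_of_real (\<beta> i)) * adj VA" by auto
  have "\<forall>i j. i \<le> j \<longrightarrow> j < 2 \<longrightarrow> fT j \<le> fT i" using assms(3) unfolding sorted_eigenvalues_def fT_def by simp
  from this[rule_format, of 0 1] have a1: "1 - \<alpha> \<le> \<alpha>" unfolding fT_def by simp
  have a2: "0 \<le> 1 - \<alpha>" using eig_nonneg[OF dT uVT eT, of 1] unfolding fT_def by simp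
  have b0: "0 \<le> \<beta> j" if "j < d" for j using eig_nonneg[OF dA uVA eA that] .
  have b1: "\<beta> j \<le> \<beta> 0" if "j < d" for j using assms(5) that unfolding sorted_eigenvalues_def by auto
  have b2: "\<beta> (d - 1) \<le> \<beta> j" if "j < d" for j using assms(5) that unfolding sorted_eigenvalues_def by auto
  have bs: "(\<Sum>j<d. \<beta> j) = 1"
  proof -
    have "(\<Sum>k<d. rhoA $$ (k,k)) = 1" using dA unfolding density_mat_def by auto
    hence "(\<Sum>p<d. complex_of_real (\<beta> p)) = 1" using eig_sum[OF uVA eA] by simp
    thus ?thesis by (metis of_real_eq_1_iff of_real_sum)
  qed
  define DT where "DT = diagm 2 (\<lambda>i. complex_of_real (fT i))"
  define DA where "DA = diagm d (\<lambda>i. complex_of_real (\<beta> i))"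
  have VT: "VT \<in> carrier_mat 2 2" and VA: "VA \<in> carrier_mat d d"
    using uVT uVA unfolding unitary_mat_def by auto
  define W where "W = kron 2 d VT VA"
  define e where "e = (\<lambda>l. complex_of_real (fT (l div d)) * complex_of_real (\<beta> (l mod d)))"
  define D where "D = diagm (2*d) e"
  have uW: "unitary_mat (2*d) W" unfolding W_def by (rule kron_unitary[OF uVT uVA])
  have W: "W \<in> carrier_mat (2*d) (2*d)" unfolding W_def by simp
  have kr: "kron 2 d rhoT rhoA = W * D * adj W"
  proof -
    have "kron 2 d rhoT rhoA = kron 2 d (VT * DT * adj VT) (VA * DA * adj VA)"
      unfolding eT eA DT_def DA_def ..
    also have "\<dots> = kron 2 d (VT * DT) (VA * DA) * kron 2 d (adj VT) (adj VA)"
      by (rule kron_mult[symmetric], insert VT VA, auto simp: DT_def DA_def)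
    also have "kron 2 d (VT * DT) (VA * DA) = kron 2 d VT VA * kron 2 d DT DA"
      by (rule kron_mult[symmetric], insert VT VA, auto simp: DT_def DA_def)
    also have "kron 2 d DT DA = D" unfolding DT_def DA_def D_def e_def by (rule kron_diagm)
    also have "kron 2 d (adj VT) (adj VA) = adj W" unfolding W_def by (rule kron_adj[symmetric, OF VT VA])
    finally show ?thesis unfolding W_def .
  qed
  define X where "X = U * W"
  have uX: "unitary_mat (2*d) X" unfolding X_def by (rule unitary_mult[OF assms(6) uW])
  have X: "X \<in> carrier_mat (2*d) (2*d)" using uX unfolding unitary_mat_def by auto
  have Uc: "U \<in> carrier_mat (2*d) (2*d)" using assms(6) unfolding unitary_mat_def by auto
  have sig: "U * kron 2 d rhoT rhoA * adj U = X * D * adj X"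
  proof -
    have "adj X = adj W * adj U" unfolding X_def by (rule adj_mult[OF Uc W])
    thus ?thesis unfolding kr X_def using Uc W carrier_matD[OF Uc] carrier_matD[OF W]
      by (simp add: assoc_dim D_def)
  qed
  define \<tau> where "\<tau> = ptrace2 2 d (X * D * adj X)"
  have tau: "\<tau> \<in> carrier_mat 2 2" unfolding \<tau>_def ptrace2_def by simp
  have "poly (char_poly \<tau>) (complex_of_real \<alpha>out) = 0"
    using assms(7) unfolding sig \<tau>_def[symmetric] sorted_eigenvalues_def
    by (simp add: poly_prod prod2)
  hence "eigenvalue \<tau> (complex_of_real \<alpha>out)" using eigenvalue_root_char_poly[OF tau] by simp
  from normalize_eigen[OF tau this] obtain v where v: "v \<in> carrier_vec 2" and v1: "v \<bullet>c v = 1"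
    and ev: "\<tau> *\<^sub>v v = complex_of_real \<alpha>out \<cdot>\<^sub>v v" by auto
  have "conjugate v \<bullet> (\<tau> *\<^sub>v v) = complex_of_real \<alpha>out * (conjugate v \<bullet> v)"
    unfolding ev using v by simp
  also have "conjugate v \<bullet> v = 1" using v1 conjugate_vec_sprod_comm[OF v v] by simp
  finally have aout: "complex_of_real \<alpha>out = conjugate v \<bullet> (\<tau> *\<^sub>v v)" by simp
  define a0 where "a0 = cnj (v $ 0)"
  define a1 where "a1 = cnj (v $ 1)"
  define q where "q = (\<lambda>l. \<Sum>j<d. (cmod (a0 * X$$(j,l) + a1 * X$$(d+j,l)))^2)"
  have vv: "v $ 0 * cnj (v $ 0) + v $ 1 * cnj (v $ 1) = 1"
    using v1 v by (simp add: scalar_prod_def sum2 lessThan_atLeast0[symmetric])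
  have vn1: "cnj a0 * a0 + cnj a1 * a1 = 1" using vv unfolding a0_def a1_def by simp
  have vn2: "(cmod a0)^2 + (cmod a1)^2 = 1"
  proof -
    have "complex_of_real ((cmod a0)^2 + (cmod a1)^2) = cnj a0 * a0 + cnj a1 * a1"
      by (simp add: cnj_sq)
    thus ?thesis using vn1 by (simp only: of_real_eq_1_iff)
  qed
  have yy: "(a0 * X$$(j,l) + a1 * X$$(d+j,l)) * cnj (a0 * X$$(j,l) + a1 * X$$(d+j,l))
      = complex_of_real ((cmod (a0 * X$$(j,l) + a1 * X$$(d+j,l)))^2)" for j l
    by (metis cnj_sq mult.commute)
  have "complex_of_real \<alpha>out = (\<Sum>l<2*d. e l * (\<Sum>j<d. (a0 * X$$(j,l) + a1 * X$$(d+j,l)) * cnj (a0 * X$$(j,l) + a1 * X$$(d+j,l))))"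
    unfolding aout \<tau>_def D_def ptrace_quadform[OF X v] by (simp add: sum2 a0_def a1_def)
  also have "\<dots> = complex_of_real (\<Sum>l<2*d. fT (l div d) * \<beta> (l mod d) * q l)"
    unfolding yy q_def e_def by simp
  finally have aq: "\<alpha>out = (\<Sum>l<2*d. fT (l div d) * \<beta> (l mod d) * q l)" by (simp only: of_real_eq_iff)
  have split: "(\<Sum>l<2*d. g l) = (\<Sum>j<d. g j + g (d + j))" for g :: "nat \<Rightarrow> real"
    unfolding sum_split_mult by (simp add: sum2 sum.distrib)
  have aq2: "\<alpha>out = (\<Sum>j<d. \<beta> j * (\<alpha> * q j + (1 - \<alpha>) * q (d + j)))"
  proof -
    have "\<alpha>out = (\<Sum>j<d. fT (j div d) * \<beta> (j mod d) * q j + fT ((d+j) div d) * \<beta> ((d+j) mod d) * q (d+j))"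
      using aq unfolding split .
    also have "\<dots> = (\<Sum>j<d. \<beta> j * (\<alpha> * q j + (1 - \<alpha>) * q (d + j)))"
      by (intro sum.cong refl, auto simp: fT_def algebra_simps)
    finally show ?thesis .
  qed
  have qs: "(\<Sum>l<2*d. q l) = real d"
  proof -
    have "complex_of_real (\<Sum>l<2*d. q l) = of_nat d"
      using q_sum[OF uX vn1] unfolding yy q_def by simp
    thus ?thesis by (metis of_real_eq_iff of_real_of_nat_eq)
  qed
  have q0: "0 \<le> q l" for l unfolding q_def by (intro sum_nonneg) auto
  have q1: "q l \<le> 1" if "l < 2*d" for l unfolding q_def by (rule q_le1[OF uX that vn2])
  show ?thesis unfolding aq2
  proof (rule scalar_bound[OF _ a1 a2 b0 b1 b2 bs])
    show "1 \<le> d" using assms(1) by simp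
    show "0 \<le> q j \<and> q j \<le> 1" if "j < d" for j using q0 q1[of j] that by auto
    show "0 \<le> q (d + j) \<and> q (d + j) \<le> 1" if "j < d" for j using q0 q1[of "d+j"] that by auto
    show "(\<Sum>j<d. q j + q (d + j)) = real d" using qs unfolding split .
  qed
qed
end
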